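(* Let $L$ be a simple finite-dimensional Lie algebra over a field $K$ of characteristic different from $2$ and $3$. Then $C(L)=0$, i.e. every skew-symmetric bilinear form $\varphi:L\times L\to K$ satisfying $\varphi([x,y],z)=\varphi([z,x],y)$ for all $x,y,z\in L$ is zero. *)

theory Defs
  imports Main "HOL.Vector_Spaces"
begin

definition lie_algebra :: "('k::field \<Rightarrow> 'v::ab_group_add \<Rightarrow> 'v) \<Rightarrow> ('v \<Rightarrow> 'v \<Rightarrow> 'v) \<Rightarrow> bool" where
  "lie_algebra scale br \<longleftrightarrow>
     vector_space scale \<and>
     (\<forall>x. Vector_Spaces.linear scale scale (br x)) \<and>
     (\<forall>y. Vector_Spaces.linear scale scale (\<lambda>x. br x y)) \<and>
     (\<forall>x. br x x = 0) \<and>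
     (\<forall>x y z. br x (br y z) + br y (br z x) + br z (br x y) = 0)"

definition finite_dim :: "('k::field \<Rightarrow> 'v::ab_group_add \<Rightarrow> 'v) \<Rightarrow> bool" where
  "finite_dim scale \<longleftrightarrow> (\<exists>B. finite B \<and> module.span scale B = UNIV)"

definition lie_ideal :: "('k::field \<Rightarrow> 'v::ab_group_add \<Rightarrow> 'v) \<Rightarrow> ('v \<Rightarrow> 'v \<Rightarrow> 'v) \<Rightarrow> 'v set \<Rightarrow> bool" where
  "lie_ideal scale br I \<longleftrightarrow> module.subspace scale I \<and> (\<forall>x y. y \<in> I \<longrightarrow> br x y \<in> I)"

definition simple_lie_algebra :: "('k::field \<Rightarrow> 'v::ab_group_add \<Rightarrow> 'v) \<Rightarrow> ('v \<Rightarrow> 'v \<Rightarrow> 'v) \<Rightarrow> bool" where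
  "simple_lie_algebra scale br \<longleftrightarrow> lie_algebra scale br \<and>
     (\<exists>x y. br x y \<noteq> 0) \<and>
     (\<forall>I. lie_ideal scale br I \<longrightarrow> I = {0} \<or> I = UNIV)"

end

theory Submission
  imports Defs
begin

lemma grp: "(x::'a::ab_group_add) + y + z = 0 \<Longrightarrow> z = -(x+y)"
proof -
  assume h: "x + y + z = 0"
  have "z = (x + y + z) - (x + y)" by (simp add: algebra_simps)
  thus ?thesis using h by simp
qed

theorem lemma1p4:
  fixes scale :: "'k::field \<Rightarrow> 'v::ab_group_add \<Rightarrow> 'v"
    and br :: "'v \<Rightarrow> 'v \<Rightarrow> 'v"
    and \<phi> :: "'v \<Rightarrow> 'v \<Rightarrow> 'k"
  assumes "simple_lie_algebra scale br"
    and "finite_dim scale"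
    and "(2::'k) \<noteq> 0" and "(3::'k) \<noteq> 0"
    and "\<forall>x. Vector_Spaces.linear scale (*) (\<phi> x)"
    and "\<forall>y. Vector_Spaces.linear scale (*) (\<lambda>x. \<phi> x y)"
    and "\<forall>x y. \<phi> x y = - \<phi> y x"
    and "\<forall>x y z. \<phi> (br x y) z = \<phi> (br z x) y"
  shows "\<forall>x y. \<phi> x y = 0"
proof -
  note simple = assms(1)[unfolded simple_lie_algebra_def]
  have lie: "lie_algebra scale br" using simple by blast
  note L = lie[unfolded lie_algebra_def]
  have mh1: "module_hom scale scale (br x)" for x
    using L linear_iff_module_hom by blast
  have mh2: "module_hom scale scale (\<lambda>x. br x y)" for y
    using L linear_iff_module_hom by blast
  have mp1: "module_hom scale (*) (\<phi> x)" for x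
    using assms(5) linear_iff_module_hom by blast
  have mp2: "module_hom scale (*) (\<lambda>x. \<phi> x y)" for y
    using assms(6) linear_iff_module_hom by blast
  have br_add1: "br x (a + b) = br x a + br x b" for x a b using module_hom.add[OF mh1] .
  have br_add2: "br (a + b) y = br a y + br b y" for y a b using module_hom.add[OF mh2[of y]] by simp
  have br_sc2: "br (scale c a) y = scale c (br a y)" for c a y using module_hom.scale[OF mh2[of y]] by simp
  have br_neg1: "br x (- a) = - br x a" for x a using module_hom.neg[OF mh1] .
  have br_diff1: "br x (a - b) = br x a - br x b" for x a b using module_hom.diff[OF mh1] .
  have br_0_2: "br 0 y = 0" for y using module_hom.zero[OF mh2[of y]] by simp
  have alt: "br x x = 0" for x using L by blast
  have skew: "br y x = - br x y" for x y
  proof -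
    have "br (x+y) (x+y) = 0" by (rule alt)
    hence "br x x + br x y + (br y x + br y y) = 0" by (simp add: br_add1 br_add2 ac_simps)
    hence "br x y + br y x = 0" by (simp add: alt)
    thus ?thesis by (simp add: eq_neg_iff_add_eq_0 add.commute)
  qed
  have jac: "br x (br y z) + br y (br z x) + br z (br x y) = 0" for x y z using L by blast
  have p_add2: "\<phi> y (a + b) = \<phi> y a + \<phi> y b" for y a b using module_hom.add[OF mp1] .
  have p_neg2: "\<phi> y (- a) = - \<phi> y a" for y a using module_hom.neg[OF mp1] .
  have p_diff2: "\<phi> y (a - b) = \<phi> y a - \<phi> y b" for y a b using module_hom.diff[OF mp1] .
  have p_sc2: "\<phi> y (scale c a) = c * \<phi> y a" for y c a using module_hom.scale[OF mp1] .
  have p_02: "\<phi> y 0 = 0" for y using module_hom.zero[OF mp1] .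
  have S: "\<phi> (br x y) z = \<phi> y (br x z)" for x y z
  proof -
    have "\<phi> (br x y) z = \<phi> (br z x) y" using assms(8) by blast
    also have "\<dots> = - \<phi> y (br z x)" using assms(7) by blast
    also have "\<dots> = \<phi> y (br x z)" by (simp add: skew[of x z] p_neg2)
    finally show ?thesis .
  qed
  have brbr: "br (br a b) y = br a (br b y) - br b (br a y)" for a b y
  proof -
    have "br a (br b y) + br b (br y a) + br y (br a b) = 0" by (rule jac)
    hence h0: "br y (br a b) = - (br a (br b y) + br b (br y a))" by (rule grp)
    have h1: "br (br a b) y = br a (br b y) + br b (br y a)"
      apply (subst skew[of "br a b" y]) apply (subst h0) by simp
    have "br b (br y a) = - br b (br a y)" by (simp only: skew[of y a] br_neg1)
    thus ?thesis using h1 by (simp only: diff_conv_add_uminus)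
  qed
  have Z: "\<phi> y (br (br a b) z) = 0" for a b y z
  proof -
    have e1: "\<phi> y (br (br a b) z) = \<phi> (br (br a b) y) z" by (rule S[symmetric])
    have e2: "\<phi> (br (br a b) y) z = \<phi> (br a (br b y)) z - \<phi> (br b (br a y)) z"
      unfolding brbr by (rule module_hom.diff[OF mp2[of z]])
    have e3: "\<phi> (br a (br b y)) z = \<phi> y (br b (br a z))" unfolding S ..
    have e4: "\<phi> (br b (br a y)) z = \<phi> y (br a (br b z))" unfolding S ..
    have e5: "\<phi> y (br b (br a z)) - \<phi> y (br a (br b z)) = - \<phi> y (br (br a b) z)"
      unfolding brbr p_diff2 by simp
    have "\<phi> y (br (br a b) z) = - \<phi> y (br (br a b) z)"
      using e1 e2 e3 e4 e5 by simp
    hence "\<phi> y (br (br a b) z) + \<phi> y (br (br a b) z) = 0" by (simp only: eq_neg_iff_add_eq_0)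
    hence "2 * \<phi> y (br (br a b) z) = 0" by (simp only: mult_2)
    thus ?thesis using assms(3) by simp
  qed
  have ideal: "I = UNIV" if sub: "module.subspace scale I" and br_in: "\<And>a b. br a b \<in> I" for I
  proof -
    have "lie_ideal scale br I" unfolding lie_ideal_def using sub br_in by blast
    hence "I = {0} \<or> I = UNIV" using simple by blast
    moreover have "I \<noteq> {0}" using simple br_in by blast
    ultimately show ?thesis by blast
  qed
  define J where "J = {w. \<forall>y z. \<phi> y (br w z) = 0}"
  have "module.subspace scale J"
    unfolding module.subspace_def[OF L[THEN conjunct1, unfolded module_iff_vector_space[symmetric]]] J_def
    by (simp add: br_0_2 p_02 br_add2 p_add2 br_sc2 p_sc2)
  moreover have "br a b \<in> J" for a b using Z J_def by blast
  ultimately have J: "J = UNIV" using ideal by blast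
  define K where "K = {w. \<forall>y. \<phi> y w = 0}"
  have "module.subspace scale K"
    unfolding module.subspace_def[OF L[THEN conjunct1, unfolded module_iff_vector_space[symmetric]]] K_def
    by (simp add: p_02 p_add2 p_sc2)
  moreover have "br a b \<in> K" for a b using J unfolding J_def K_def by blast
  ultimately have "K = UNIV" using ideal by blast
  thus ?thesis unfolding K_def by blast
qed

end
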